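(* Let $X$ be a locally finite poset with unique minimal element $0$ which is a complete lattice equipped with a conjugation $x\mapsto\overline{x}$, let $L^+$ be a totally ordered set with bottom $\mathbb{O}$ and top $\mathbb{1}$ equipped with a conjugation $a\mapsto\overline{a}$, let $g:X\to L^+$ be isotone and let $\overline{g}(x):=\overline{g(\overline{x})}$. Then: (i) $\mathscr{C}(\overline{g})=\{\overline{C}: C\in\mathscr{C}(g)\}$, where for $C=\{c_1<\cdots<c_l\}$ one sets $\overline{C}=\{\overline{c_l}<\cdots<\overline{c_1}\}$, and the value of $\overline{C}$ is $\overline{g}(\overline{C})=\overline{g(C)}$; (ii) for every $x\in X$: $m^{\overline{g}}(x)=\mathbb{O}$ if $x$ lies in some $\overline{C}\in\mathscr{C}(\overline{g})$ and $x\ne\overline{C}_*$; $m^{\overline{g}}(x)=\overline{m^g(C_* )}$ if $x=\overline{C}_*$ for some $\overline{C}\in\mathscr{C}(\overline{g})$ (with $C$ the corresponding $g$-chain); and $m^{\overline{g}}(x)=\overline{m^g(\overline{x})}$ otherwise.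
   Context: A conjugation on a lattice is a bijective order-reversing map $a\mapsto\overline{a}$ with $\overline{\overline{a}}=a$. Locally finite: every interval is finite; $y\prec x$ means $x$ covers $y$. For isotone $h:X\to L^+$, its canonical Möbius transform is $m^h(x)=h(x)$ if $h(x)>h(y)$ for all $y\prec x$, and $m^h(x)=\mathbb{O}$ otherwise. An $h$-chain is a chain $C\subseteq X$ with at least two elements on which $h$ is constant and which is maximal for inclusion among chains on which $h$ is constant; its value $h(C)$ is the common value, $C_*$ its minimal element; $\mathscr{C}(h)$ is the set of $h$-chains. Under the present assumptions every $h$-chain is finite. *)

theory Defs
  imports Main
begin

definition is_conjugation :: "('a::order \<Rightarrow> 'a) \<Rightarrow> bool" where
  "is_conjugation c \<longleftrightarrow> bij c \<and> (\<forall>a b. a \<le> b \<longrightarrow> c b \<le> c a) \<and> (\<forall>a. c (c a) = a)"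

definition locally_finite :: "'a::order itself \<Rightarrow> bool" where
  "locally_finite _ \<longleftrightarrow> (\<forall>a b::'a. finite {a..b})"

definition covers :: "'a::order \<Rightarrow> 'a \<Rightarrow> bool" where
  "covers y x \<longleftrightarrow> y < x \<and> \<not> (\<exists>z. y < z \<and> z < x)"

definition mobius :: "('a::order \<Rightarrow> 'b::{linorder,order_bot}) \<Rightarrow> 'a \<Rightarrow> 'b" where
  "mobius h x = (if (\<forall>y. covers y x \<longrightarrow> h y < h x) then h x else bot)"

definition is_h_chain :: "('a::order \<Rightarrow> 'b) \<Rightarrow> 'a set \<Rightarrow> bool" where
  "is_h_chain h C \<longleftrightarrow>
     Complete_Partial_Order.chain (\<le>) C \<and> (\<exists>a\<in>C. \<exists>b\<in>C. a \<noteq> b) \<and>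
     (\<forall>a\<in>C. \<forall>b\<in>C. h a = h b) \<and>
     (\<forall>D. C \<subseteq> D \<and> Complete_Partial_Order.chain (\<le>) D \<and> (\<forall>a\<in>D. \<forall>b\<in>D. h a = h b)
          \<longrightarrow> D = C)"

definition h_chains :: "('a::order \<Rightarrow> 'b) \<Rightarrow> 'a set set" where
  "h_chains h = {C. is_h_chain h C}"

definition chain_val :: "('a \<Rightarrow> 'b) \<Rightarrow> 'a set \<Rightarrow> 'b" where
  "chain_val h C = h (SOME c. c \<in> C)"

definition chain_min :: "'a::order set \<Rightarrow> 'a" where
  "chain_min C = (THE c. c \<in> C \<and> (\<forall>d\<in>C. c \<le> d))"

definition conj_fun :: "('a \<Rightarrow> 'a) \<Rightarrow> ('b \<Rightarrow> 'b) \<Rightarrow> ('a \<Rightarrow> 'b) \<Rightarrow> 'a \<Rightarrow> 'b" where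
  "conj_fun cX cL g = (\<lambda>x. cL (g (cX x)))"

end

theory Submission
  imports Defs
begin

lemma conjD:
  assumes "is_conjugation c"
  shows "c (c a) = a" "a \<le> b \<Longrightarrow> c b \<le> c a" "(c a \<le> c b) = (b \<le> a)"
    "(c a = c b) = (a = b)" "(c a < c b) = (b < a)"
proof -
  have inv: "\<And>a. c (c a) = a" and anti: "\<And>a b. a \<le> b \<Longrightarrow> c b \<le> c a"
    using assms unfolding is_conjugation_def by auto
  show "c (c a) = a" by (rule inv)
  show "a \<le> b \<Longrightarrow> c b \<le> c a" by (rule anti)
  show le: "(c a \<le> c b) = (b \<le> a)" by (metis anti inv)
  show eq: "(c a = c b) = (a = b)" by (metis inv)
  show "(c a < c b) = (b < a)" by (metis le eq less_le)
qed

lemma finite_univ: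
  assumes "locally_finite TYPE('a::complete_lattice)"
  shows "finite (UNIV :: 'a set)"
proof -
  have "(UNIV :: 'a set) = {bot..top}" by auto
  then show ?thesis using assms unfolding locally_finite_def by metis
qed

lemma chain_image:
  assumes "is_conjugation c" "Complete_Partial_Order.chain (\<le>) C"
  shows "Complete_Partial_Order.chain (\<le>) (c ` C)"
  unfolding chain_def
proof (intro ballI)
  fix x y assume "x \<in> c ` C" "y \<in> c ` C"
  then obtain a b where "a \<in> C" "b \<in> C" "x = c a" "y = c b" by blast
  then have "a \<le> b \<or> b \<le> a" using assms(2) unfolding chain_def by blast
  then show "x \<le> y \<or> y \<le> x" using conjD(2)[OF assms(1)] \<open>x = c a\<close> \<open>y = c b\<close> by blast
qed

lemma hchain_conj:
  assumes cX: "is_conjugation cX" and cL: "is_conjugation cL"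
    and H: "is_h_chain h C"
  shows "is_h_chain (conj_fun cX cL h) (cX ` C)"
proof -
  note X = conjD[OF cX] and L = conjD[OF cL]
  let ?G = "conj_fun cX cL h"
  have ch: "Complete_Partial_Order.chain (\<le>) C" and two: "\<exists>a\<in>C. \<exists>b\<in>C. a \<noteq> b"
    and con: "\<forall>a\<in>C. \<forall>b\<in>C. h a = h b"
    and mx: "\<And>D. C \<subseteq> D \<Longrightarrow> Complete_Partial_Order.chain (\<le>) D \<Longrightarrow> (\<forall>a\<in>D. \<forall>b\<in>D. h a = h b) \<Longrightarrow> D = C"
    using H unfolding is_h_chain_def by blast+
  have G: "\<And>a. ?G (cX a) = cL (h a)" by (simp add: conj_fun_def X(1))
  show ?thesis unfolding is_h_chain_def
  proof (intro conjI allI impI)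
    show "Complete_Partial_Order.chain (\<le>) (cX ` C)" by (rule chain_image[OF cX ch])
    show "\<exists>a\<in>cX ` C. \<exists>b\<in>cX ` C. a \<noteq> b"
    proof -
      obtain a b where "a \<in> C" "b \<in> C" "a \<noteq> b" using two by blast
      then have "cX a \<in> cX ` C" "cX b \<in> cX ` C" "cX a \<noteq> cX b" using X(4)[of a b] by auto
      then show ?thesis by blast
    qed
    show "\<forall>a\<in>cX ` C. \<forall>b\<in>cX ` C. ?G a = ?G b"
    proof (intro ballI)
      fix a b assume "a \<in> cX ` C" "b \<in> cX ` C"
      then obtain a' b' where "a' \<in> C" "b' \<in> C" "a = cX a'" "b = cX b'" by blast
      then have "h a' = h b'" using con by blast
      then show "?G a = ?G b" using G \<open>a = cX a'\<close> \<open>b = cX b'\<close> by simp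
    qed
    fix D assume D: "cX ` C \<subseteq> D \<and> Complete_Partial_Order.chain (\<le>) D \<and> (\<forall>a\<in>D. \<forall>b\<in>D. ?G a = ?G b)"
    have "C \<subseteq> cX ` D"
    proof
      fix c assume "c \<in> C"
      then have "cX c \<in> D" using D by blast
      then show "c \<in> cX ` D" using X(1)[of c] by (metis image_eqI)
    qed
    moreover have "Complete_Partial_Order.chain (\<le>) (cX ` D)" using chain_image[OF cX] D by blast
    moreover have "\<forall>a\<in>cX ` D. \<forall>b\<in>cX ` D. h a = h b"
    proof (intro ballI)
      fix a b assume "a \<in> cX ` D" "b \<in> cX ` D"
      then obtain a' b' where "a' \<in> D" "b' \<in> D" "a = cX a'" "b = cX b'" by blast
      then have "?G a' = ?G b'" using D by blast
      then have "cL (h a) = cL (h b)" using \<open>a = cX a'\<close> \<open>b = cX b'\<close> by (simp add: conj_fun_def)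
      then show "h a = h b" using L(4)[of "h a" "h b"] by simp
    qed
    ultimately have "cX ` D = C" by (rule mx)
    then have "cX ` cX ` D = cX ` C" by simp
    then show "D = cX ` C" by (simp add: image_image X(1))
  qed
qed

lemma chain_least:
  assumes "finite C" "C \<noteq> {}" "Complete_Partial_Order.chain (\<le>) C"
  shows "chain_min C \<in> C \<and> (\<forall>d\<in>C. chain_min C \<le> (d::'a::order))"
proof -
  obtain m where m: "m \<in> C" "\<forall>b\<in>C. b \<le> m \<longrightarrow> m = b"
    using finite_has_minimal[OF assms(1,2)] by blast
  have least: "\<forall>d\<in>C. m \<le> d" using m assms(3) unfolding chain_def by metis
  have "chain_min C = m" unfolding chain_min_def
    by (rule the_equality) (use m least in \<open>auto intro: order.antisym\<close>)
  then show ?thesis using m least by simp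
qed

lemma exists_cover:
  assumes "finite (UNIV :: 'a set)" "(d::'a::order) < x"
  shows "\<exists>y. covers y x \<and> d \<le> y"
proof -
  let ?S = "{z. d \<le> z \<and> z < x}"
  have f: "finite ?S" using finite_subset[OF subset_UNIV assms(1)] .
  have "d \<in> ?S" using assms by auto
  then obtain m where m: "m \<in> ?S" "\<forall>b\<in>?S. m \<le> b \<longrightarrow> m = b"
    using finite_has_maximal2[OF f] by blast
  have "covers m x" unfolding covers_def
    using m by (metis (mono_tags, lifting) less_le mem_Collect_eq order.trans)
  then show ?thesis using m by blast
qed

lemma hchain_props:
  assumes "finite (UNIV :: 'a set)" "is_h_chain h (C::'a::order set)"
  shows "chain_min C \<in> C" "\<forall>d\<in>C. chain_min C \<le> d" "C \<noteq> {}"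
proof -
  have f: "finite C" using finite_subset[OF subset_UNIV assms(1)] .
  have ne: "C \<noteq> {}" and ch: "Complete_Partial_Order.chain (\<le>) C"
    using assms(2) unfolding is_h_chain_def by blast+
  show "chain_min C \<in> C" "\<forall>d\<in>C. chain_min C \<le> d" "C \<noteq> {}"
    using chain_least[OF f ne ch] ne by blast+
qed

lemma mob_nonmin:
  fixes h :: "'a::order \<Rightarrow> 'b::{linorder,order_bot}"
  assumes fin: "finite (UNIV :: 'a set)" and mono: "mono h" and H: "is_h_chain h D"
    and x: "x \<in> D" "x \<noteq> chain_min D"
  shows "mobius h x = bot"
proof -
  let ?m = "chain_min D"
  have m: "?m \<in> D" "?m \<le> x" using hchain_props[OF fin H] x by auto
  then have "?m < x" using x by auto
  then obtain y where y: "covers y x" "?m \<le> y" using exists_cover[OF fin] by blast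
  have "h ?m = h x" using H m x unfolding is_h_chain_def by blast
  moreover have "h ?m \<le> h y" "h y \<le> h x" using y mono unfolding covers_def mono_def
    by (auto simp: less_le)
  ultimately have "\<not> h y < h x" by auto
  then show ?thesis using y unfolding mobius_def by auto
qed

lemma mob_min:
  fixes h :: "'a::order \<Rightarrow> 'b::{linorder,order_bot}"
  assumes fin: "finite (UNIV :: 'a set)" and mono: "mono h" and H: "is_h_chain h C"
  shows "mobius h (chain_min C) = h (chain_min C)"
proof -
  let ?m = "chain_min C"
  have m: "?m \<in> C" "\<forall>d\<in>C. ?m \<le> d" using hchain_props[OF fin H] by auto
  have ch: "Complete_Partial_Order.chain (\<le>) C" and con: "\<forall>a\<in>C. \<forall>b\<in>C. h a = h b"
    and mx: "\<And>D. C \<subseteq> D \<Longrightarrow> Complete_Partial_Order.chain (\<le>) D \<Longrightarrow> (\<forall>a\<in>D. \<forall>b\<in>D. h a = h b) \<Longrightarrow> D = C"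
    using H unfolding is_h_chain_def by blast+
  have "h y < h ?m" if y: "covers y ?m" for y
  proof (rule ccontr)
    assume "\<not> h y < h ?m"
    moreover have "h y \<le> h ?m" using y mono unfolding covers_def mono_def by (auto simp: less_le)
    ultimately have e: "h y = h ?m" by auto
    have yl: "\<forall>d\<in>C. y < d" using y m unfolding covers_def by (auto intro: less_le_trans)
    have "Complete_Partial_Order.chain (\<le>) (insert y C)"
      using ch yl unfolding chain_def by (auto simp: less_le)
    moreover have "\<forall>a\<in>insert y C. \<forall>b\<in>insert y C. h a = h b"
    proof (intro ballI)
      fix a b assume ab: "a \<in> insert y C" "b \<in> insert y C"
      have "\<And>z. z \<in> insert y C \<Longrightarrow> h z = h ?m"
      proof -
        fix z assume "z \<in> insert y C"
        then show "h z = h ?m" using e m(1) con by blast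
      qed
      then show "h a = h b" using ab by metis
    qed
    ultimately have "insert y C = C" using mx by blast
    then show False using yl by auto
  qed
  then show ?thesis unfolding mobius_def by auto
qed

lemma extend_chain:
  fixes h :: "'a::order \<Rightarrow> 'b"
  assumes fin: "finite (UNIV :: 'a set)" and ch: "Complete_Partial_Order.chain (\<le>) D"
    and con: "\<forall>a\<in>D. \<forall>b\<in>D. h a = h b" and two: "a \<in> D" "b \<in> D" "a \<noteq> b"
  shows "\<exists>C. is_h_chain h C \<and> D \<subseteq> C"
proof -
  define S where "S = {E. D \<subseteq> E \<and> Complete_Partial_Order.chain (\<le>) E \<and> (\<forall>a\<in>E. \<forall>b\<in>E. h a = h b)}"
  have "finite (Pow (UNIV :: 'a set))" using finite_Pow_iff[THEN iffD2, OF fin] .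
  moreover have "S \<subseteq> Pow UNIV" by simp
  ultimately have fS: "finite S" by (rule finite_subset[rotated])
  have "D \<in> S" unfolding S_def using ch con by blast
  then have nS: "S \<noteq> {}" by blast
  obtain E where E1: "E \<in> S" and E2: "\<forall>F\<in>S. E \<subseteq> F \<longrightarrow> E = F"
    using finite_has_maximal[OF fS nS] by blast
  have Ep: "D \<subseteq> E" "Complete_Partial_Order.chain (\<le>) E" "\<forall>a\<in>E. \<forall>b\<in>E. h a = h b"
    using E1 unfolding S_def by blast+
  have "is_h_chain h E" unfolding is_h_chain_def
  proof (intro conjI allI impI)
    show "Complete_Partial_Order.chain (\<le>) E" "\<forall>a\<in>E. \<forall>b\<in>E. h a = h b" using Ep by blast+
    show "\<exists>a\<in>E. \<exists>b\<in>E. a \<noteq> b" using Ep(1) two by blast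
    fix F assume F: "E \<subseteq> F \<and> Complete_Partial_Order.chain (\<le>) F \<and> (\<forall>a\<in>F. \<forall>b\<in>F. h a = h b)"
    then have "F \<in> S" unfolding S_def using Ep(1) by blast
    then show "F = E" using E2 F by blast
  qed
  then show ?thesis using Ep(1) by blast
qed

lemma mob_free:
  fixes h :: "'a::order \<Rightarrow> 'b::{linorder,order_bot}"
  assumes fin: "finite (UNIV :: 'a set)" and mono: "mono h" and nx: "\<forall>D\<in>h_chains h. x \<notin> D"
  shows "mobius h x = h x"
proof -
  have "h y < h x" if y: "covers y x" for y
  proof (rule ccontr)
    assume "\<not> h y < h x"
    moreover have "h y \<le> h x" using y mono unfolding covers_def mono_def by (auto simp: less_le)
    ultimately have e: "h y = h x" by auto
    have "Complete_Partial_Order.chain (\<le>) {y, x}" using y unfolding chain_def covers_def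
      by (auto simp: less_le)
    moreover have "\<forall>a\<in>{y,x}. \<forall>b\<in>{y,x}. h a = h b" using e by auto
    moreover have "y \<noteq> x" using y unfolding covers_def by auto
    ultimately obtain C where "is_h_chain h C" "{y,x} \<subseteq> C"
      using extend_chain[OF fin, of "{y,x}" h y x] by blast
    then show False using nx unfolding h_chains_def by blast
  qed
  then show ?thesis unfolding mobius_def by auto
qed

theorem proposition7:
  fixes cX :: "'a::complete_lattice \<Rightarrow> 'a"
    and cL :: "'b::{linorder,order_bot,order_top} \<Rightarrow> 'b"
    and g :: "'a \<Rightarrow> 'b"
  assumes "locally_finite TYPE('a)"
    and "is_conjugation cX"
    and "is_conjugation cL"
    and "mono g"
  shows "h_chains (conj_fun cX cL g) = (\<lambda>C. cX ` C) ` h_chains g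
     \<and> (\<forall>C\<in>h_chains g. chain_val (conj_fun cX cL g) (cX ` C) = cL (chain_val g C))
     \<and> (\<forall>x. (\<forall>D\<in>h_chains (conj_fun cX cL g). x \<in> D \<and> x \<noteq> chain_min D
                \<longrightarrow> mobius (conj_fun cX cL g) x = bot)
          \<and> (\<forall>C\<in>h_chains g. x = chain_min (cX ` C)
                \<longrightarrow> mobius (conj_fun cX cL g) x = cL (mobius g (chain_min C)))
          \<and> ((\<forall>D\<in>h_chains (conj_fun cX cL g). x \<notin> D)
                \<longrightarrow> mobius (conj_fun cX cL g) x = cL (mobius g (cX x))))"
proof -
  note X = conjD[OF assms(2)] and L = conjD[OF assms(3)]
  have fin: "finite (UNIV :: 'a set)" by (rule finite_univ[OF assms(1)])
  let ?G = "conj_fun cX cL g"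
  have GG: "conj_fun cX cL ?G = g" by (simp add: conj_fun_def X(1) L(1) fun_eq_iff)
  have G: "\<And>a. ?G (cX a) = cL (g a)" by (simp add: conj_fun_def X(1))
  have monoG: "mono ?G" unfolding mono_def conj_fun_def
  proof (intro allI impI)
    fix a b :: 'a assume "a \<le> b"
    then have "cX b \<le> cX a" by (rule X(2))
    then have "g (cX b) \<le> g (cX a)" by (rule monoD[OF assms(4)])
    then show "cL (g (cX a)) \<le> cL (g (cX b))" by (rule L(2))
  qed
  have P1: "h_chains ?G = (\<lambda>C. cX ` C) ` h_chains g"
  proof
    show "(\<lambda>C. cX ` C) ` h_chains g \<subseteq> h_chains ?G"
      using hchain_conj[OF assms(2,3)] unfolding h_chains_def by blast
  next
    show "h_chains ?G \<subseteq> (\<lambda>C. cX ` C) ` h_chains g"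
    proof
      fix D assume "D \<in> h_chains ?G"
      then have "cX ` D \<in> h_chains g"
        using hchain_conj[OF assms(2,3), of ?G D] GG unfolding h_chains_def by simp
      moreover have "D = cX ` cX ` D" by (simp add: image_image X(1))
      ultimately show "D \<in> (\<lambda>C. cX ` C) ` h_chains g" by blast
    qed
  qed
  have P2: "\<forall>C\<in>h_chains g. chain_val ?G (cX ` C) = cL (chain_val g C)"
  proof
    fix C assume C: "C \<in> h_chains g"
    then have H: "is_h_chain g C" unfolding h_chains_def by simp
    have ne: "C \<noteq> {}" by (rule hchain_props(3)[OF fin H])
    have c1: "(SOME c. c \<in> C) \<in> C" using ne by (simp add: some_in_eq)
    have "(SOME c. c \<in> cX ` C) \<in> cX ` C" using ne by (simp add: some_in_eq)
    then obtain c2 where c2: "c2 \<in> C" "(SOME c. c \<in> cX ` C) = cX c2" by blast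
    have "g c2 = g (SOME c. c \<in> C)" using H c1 c2 unfolding is_h_chain_def by blast
    then show "chain_val ?G (cX ` C) = cL (chain_val g C)"
      unfolding chain_val_def using c2 G by simp
  qed
  have P3: "\<forall>D\<in>h_chains ?G. x \<in> D \<and> x \<noteq> chain_min D \<longrightarrow> mobius ?G x = bot" for x
  proof (intro ballI impI)
    fix D assume "D \<in> h_chains ?G" "x \<in> D \<and> x \<noteq> chain_min D"
    then show "mobius ?G x = bot" using mob_nonmin[OF fin monoG, of D x] unfolding h_chains_def by simp
  qed
  have P4: "\<forall>C\<in>h_chains g. x = chain_min (cX ` C) \<longrightarrow> mobius ?G x = cL (mobius g (chain_min C))" for x
  proof (intro ballI impI)
    fix C assume C: "C \<in> h_chains g" and x: "x = chain_min (cX ` C)"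
    then have H: "is_h_chain g C" unfolding h_chains_def by simp
    have H': "is_h_chain ?G (cX ` C)" by (rule hchain_conj[OF assms(2,3) H])
    have "mobius ?G x = ?G x" using mob_min[OF fin monoG H'] x by simp
    moreover have "x \<in> cX ` C" using hchain_props(1)[OF fin H'] x by simp
    then obtain c where c: "c \<in> C" "x = cX c" by blast
    moreover have "mobius g (chain_min C) = g (chain_min C)" by (rule mob_min[OF fin assms(4) H])
    moreover have "g (chain_min C) = g c" using hchain_props(1)[OF fin H] c H
      unfolding is_h_chain_def by blast
    ultimately show "mobius ?G x = cL (mobius g (chain_min C))" using G by simp
  qed
  have P5: "(\<forall>D\<in>h_chains ?G. x \<notin> D) \<longrightarrow> mobius ?G x = cL (mobius g (cX x))" for x
  proof
    assume nx: "\<forall>D\<in>h_chains ?G. x \<notin> D"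
    have "mobius ?G x = ?G x" by (rule mob_free[OF fin monoG nx])
    moreover have "\<forall>C\<in>h_chains g. cX x \<notin> C"
    proof
      fix C assume "C \<in> h_chains g"
      then have "cX ` C \<in> h_chains ?G" using P1 by blast
      then have "x \<notin> cX ` C" using nx by blast
      then show "cX x \<notin> C" using X(1)[of x] by (metis imageI)
    qed
    then have "mobius g (cX x) = g (cX x)" by (rule mob_free[OF fin assms(4)])
    ultimately show "mobius ?G x = cL (mobius g (cX x))" by (simp add: conj_fun_def)
  qed
  show ?thesis
  proof (intro conjI allI)
    show "h_chains ?G = (\<lambda>C. cX ` C) ` h_chains g" by (rule P1)
    show "\<forall>C\<in>h_chains g. chain_val ?G (cX ` C) = cL (chain_val g C)" by (rule P2)
  qed (rule P3, rule P4, rule P5)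
qed

end
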